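(* Let $n_u,N\ge1$, $n=Nn_u$, and write $\mathbf{u}\in\mathbb{R}^n$ as $\mathbf{u}=(u_1,\dots,u_N)$ with $u_\ell\in\mathbb{R}^{n_u}$. Let $\varepsilon>0$ and $$\mathcal{U}=\{\mathbf{u}\in\mathbb{R}^n:\ \|u_\ell\|_2^2\le\varepsilon,\ \ell=1,\dots,N\}.$$ Let $\mathcal{P}$ be a finite index set of pairs $(i,j)$, and for each $(i,j)\in\mathcal{P}$ let $H^{[ij]}\in\mathbb{R}^{n\times n}$ be a nonzero symmetric positive semidefinite matrix, $c^{[ij]}\in\mathbb{R}^n$ in the column space of $H^{[ij]}$, $h^{[ij]}\in\mathbb{R}$, $w_{ij}\ge0$. Define $q_{ij}(\mathbf{z})=\mathbf{z}^\top H^{[ij]}\mathbf{z}+(c^{[ij]})^\top\mathbf{z}+\tfrac14(c^{[ij]})^\top (H^{[ij]})^{+}c^{[ij]}$, $D_{ij}=\{\mathbf{z}: q_{ij}(\mathbf{z})\le\tfrac12\}$, and $F(\mathbf{u})=\sum_{(i,j)\in\mathcal{P}}w_{ij}\exp(-\mathbf{u}^\top H^{[ij]}\mathbf{u}-(c^{[ij]})^\top\mathbf{u}-h^{[ij]})$. Suppose that for each $(i,j)\in\mathcal{P}$, $0\in D_{ij}$, and let $\mathbf{z}^*_{ij}$ be a minimizer of $\mathbf{z}^\top\mathbf{z}$ subject to $q_{ij}(\mathbf{z})=\tfrac12$ (such a minimizer exists). Then: (i) for each $(i,j)$, every $\mathbf{u}$ with $\|\mathbf{u}\|_2\le\|\mathbf{z}^*_{ij}\|_2$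 belongs to $D_{ij}$; (ii) if $\sqrt{\varepsilon N}\le\|\mathbf{z}^*_{ij}\|_2$ for every $(i,j)\in\mathcal{P}$, then $\mathcal{U}\subseteq D_{ij}$ for all $(i,j)$ and $F$ is concave on $\mathcal{U}$.
   Context: $(H)^{+}$ denotes the Moore–Penrose pseudoinverse. In the application, $F$ is the weighted sum of Bhattacharyya coefficients bounding the predicted misdiagnosis probability, with weights $w_{ij}=\sqrt{P_k(M^{[i]})P_k(M^{[j]})}$, and $\mathcal{U}$ is an input energy constraint set over a horizon of length $N$. *)

theory Defs
  imports "HOL-Analysis.Analysis"
begin

definition pinv :: "real^'n^'n \<Rightarrow> real^'n^'n" where
  "pinv A = (THE X. A ** X ** A = A \<and> X ** A ** X = X \<and>
                    transpose (A ** X) = A ** X \<and> transpose (X ** A) = X ** A)"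

definition psd :: "real^'n^'n \<Rightarrow> bool" where
  "psd A \<longleftrightarrow> transpose A = A \<and> (\<forall>x. 0 \<le> x \<bullet> (A *v x))"

text \<open>Block l of a vector indexed by (block index, within-block index).\<close>
definition blk :: "real^('N::finite \<times> 'u::finite) \<Rightarrow> 'N \<Rightarrow> real^'u" where
  "blk u l = (\<chi> k. u $ (l, k))"

definition qf :: "real^'n^'n \<Rightarrow> real^'n \<Rightarrow> real^'n \<Rightarrow> real" where
  "qf H c z = z \<bullet> (H *v z) + c \<bullet> z + 1/4 * (c \<bullet> (pinv H *v c))"

definition Dset :: "real^'n^'n \<Rightarrow> real^'n \<Rightarrow> (real^'n) set" where
  "Dset H c = {z. qf H c z \<le> 1/2}"

definition is_qmin :: "real^'n^'n \<Rightarrow> real^'n \<Rightarrow> real^'n \<Rightarrow> bool" where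
  "is_qmin H c z \<longleftrightarrow> qf H c z = 1/2 \<and> (\<forall>y. qf H c y = 1/2 \<longrightarrow> z \<bullet> z \<le> y \<bullet> y)"

definition Uset :: "real \<Rightarrow> (real^('N::finite \<times> 'u::finite)) set" where
  "Uset \<epsilon> = {u. \<forall>l. (norm (blk u l))\<^sup>2 \<le> \<epsilon>}"

definition Fsum :: "'p set \<Rightarrow> ('p \<Rightarrow> real) \<Rightarrow> ('p \<Rightarrow> real^'n^'n) \<Rightarrow> ('p \<Rightarrow> real^'n)
                     \<Rightarrow> ('p \<Rightarrow> real) \<Rightarrow> real^'n \<Rightarrow> real" where
  "Fsum P w H c h u = (\<Sum>ij\<in>P. w ij * exp (- (u \<bullet> (H ij *v u)) - c ij \<bullet> u - h ij))"

end

theory Submission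
  imports Defs
begin


lemma inner_transp: "inner x (A *v y) = inner (transpose A *v x) (y::real^'n)"
  by (simp add: dot_lmul_matrix)

lemma sym_inner: "transpose A = A \<Longrightarrow> inner (A *v x) y = inner x (A *v (y::real^'n))"
  by (metis inner_transp)

lemma vec_eq_inner: "(\<And>y. inner a y = inner b (y::'a::real_inner)) \<Longrightarrow> a = b"
  by (metis inner_diff_left inner_eq_zero_iff right_minus_eq)

lemma transpose_eqI:
  fixes K :: "real^'n^'n"
  assumes "\<And>x y. inner x (K *v y) = inner (K *v x) y"
  shows "transpose K = K"
proof -
  have "\<And>x. transpose K *v x = K *v x"
  proof (rule vec_eq_inner)
    fix x y show "inner (transpose K *v x) y = inner (K *v x) y"
      using assms inner_transp by metis
  qed
  then show ?thesis by (simp add: matrix_eq)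
qed

definition penrose :: "real^'n^'n \<Rightarrow> real^'n^'n \<Rightarrow> bool" where
  "penrose A X \<longleftrightarrow> A ** X ** A = A \<and> X ** A ** X = X \<and>
                    transpose (A ** X) = A ** X \<and> transpose (X ** A) = X ** A"

lemma penrose_unique:
  assumes "penrose A X" "penrose A Y" shows "X = Y"
proof -
  let ?T = transpose
  have x1: "A ** X ** A = A" and x2: "X ** A ** X = X" and x3: "?T (A ** X) = A ** X"
    and x4: "?T (X ** A) = X ** A" using assms(1) by (auto simp: penrose_def)
  have y1: "A ** Y ** A = A" and y2: "Y ** A ** Y = Y" and y3: "?T (A ** Y) = A ** Y"
    and y4: "?T (Y ** A) = Y ** A" using assms(2) by (auto simp: penrose_def)
  have "X = X ** (A ** X)" using x2 by (simp add: matrix_mul_assoc)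
  also have "\<dots> = X ** ?T (A ** X)" using x3 by simp
  also have "\<dots> = X ** ?T X ** ?T A" by (simp add: matrix_transpose_mul matrix_mul_assoc)
  also have "\<dots> = X ** ?T X ** ?T (A ** Y ** A)" using y1 by simp
  also have "\<dots> = X ** (?T (A ** X) ** ?T (A ** Y))" by (simp add: matrix_transpose_mul matrix_mul_assoc)
  also have "\<dots> = X ** ((A ** X) ** (A ** Y))" using x3 y3 by simp
  also have "\<dots> = (X ** A ** X) ** A ** Y" by (simp add: matrix_mul_assoc)
  also have "\<dots> = X ** A ** Y" using x2 by simp
  finally have X: "X = X ** A ** Y" .
  have "Y = (Y ** A) ** Y" using y2 by (simp add: matrix_mul_assoc)
  also have "\<dots> = ?T (Y ** A) ** Y" using y4 by simp
  also have "\<dots> = ?T A ** ?T Y ** Y" by (simp add: matrix_transpose_mul matrix_mul_assoc)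
  also have "\<dots> = ?T (A ** X ** A) ** ?T Y ** Y" using x1 by simp
  also have "\<dots> = (?T (X ** A) ** ?T (Y ** A)) ** Y" by (simp add: matrix_transpose_mul matrix_mul_assoc)
  also have "\<dots> = ((X ** A) ** (Y ** A)) ** Y" using x4 y4 by simp
  also have "\<dots> = X ** (A ** Y ** A) ** Y" by (simp add: matrix_mul_assoc)
  also have "\<dots> = X ** A ** Y" using y1 by (simp add: matrix_mul_assoc)
  finally show ?thesis using X by simp
qed



lemma penrose_exists_sym:
  fixes A :: "real^'n^'n"
  assumes symA: "transpose A = A"
  shows "\<exists>X. penrose A X"
proof -
  define N where "N = {v::real^'n. A *v v = 0}"
  have "subspace N" unfolding N_def
    by (simp add: subspace_def matrix_vector_right_distrib matrix_vector_mult_scaleR)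
  then obtain B where BN: "B \<subseteq> N" and Bo: "pairwise orthogonal B" and B1: "\<And>x. x \<in> B \<Longrightarrow> norm x = 1"
    and Bi: "independent B" and Bs: "span B = N"
    by (metis orthonormal_basis_subspace)
  have fB: "finite B" using Bi independent_imp_finite by blast
  define p where "p v = (\<Sum>b\<in>B. inner b v *\<^sub>R b)" for v
  have lp: "linear p" unfolding p_def
    by (rule linearI) (simp_all add: inner_add_right scaleR_add_left sum.distrib scaleR_sum_right)
  define P where "P = matrix p"
  have Pv: "P *v v = p v" for v unfolding P_def using lp by simp
  have pN: "p v \<in> N" for v
  proof -
    have "p v \<in> span B" unfolding p_def
      by (intro span_sum) (simp add: span_base span_mul)
    then show ?thesis using Bs by simp
  qed
  have bp: "inner b (p v) = inner b v" if "b \<in> B" for b v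
  proof -
    have "inner b (p v) = (\<Sum>b'\<in>B. inner b' v * inner b b')"
      unfolding p_def by (simp add: inner_sum_right)
    also have "\<dots> = (\<Sum>b'\<in>B. if b' = b then inner b v else 0)"
    proof (rule sum.cong)
      fix b' assume b': "b' \<in> B"
      show "inner b' v * inner b b' = (if b' = b then inner b v else 0)"
      proof (cases "b' = b")
        case True then show ?thesis using B1[OF that] by (simp add: dot_square_norm)
      next
        case False then show ?thesis using Bo b' that
          by (auto simp: pairwise_def orthogonal_def)
      qed
    qed simp
    also have "\<dots> = inner b v" using fB that by simp
    finally show ?thesis .
  qed
  have pfix: "p v = v" if "v \<in> N" for v
  proof -
    have "v - p v \<in> span B" using that pN Bs by (metis span_diff span_base span_span)
    moreover have "orthogonal (v - p v) y" if "y \<in> B" for y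
      unfolding orthogonal_def inner_diff_left using bp[OF that] by (metis inner_commute diff_self)
    ultimately have "orthogonal (v - p v) (v - p v)" by (metis orthogonal_to_span)
    then show ?thesis by (simp add: orthogonal_self)
  qed
  have psym: "inner x (p y) = inner (p x) y" for x y
    unfolding p_def by (simp add: inner_sum_right inner_sum_left mult.commute inner_commute)
  have ANz: "inner (A *v u) w = 0" if "w \<in> N" for u w
    using that sym_inner[OF symA, of u w] by (simp add: N_def)
  have AP: "A *v (P *v v) = 0" for v using pN[of v] by (simp add: Pv N_def)
  have PA: "P *v (A *v v) = 0" for v
    unfolding Pv p_def using BN ANz
    by (intro sum.neutral) (auto simp: inner_commute)
  have PP: "P *v (P *v v) = P *v v" for v using pfix pN by (simp add: Pv)
  define M where "M = A + P"
  have Mv: "M *v v = A *v v + P *v v" for v by (simp add: M_def matrix_vector_mult_add_rdistrib)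
  have "inj ((*v) M)"
  proof (rule injI)
    fix x y assume "M *v x = M *v y"
    then have e: "M *v (x - y) = 0" by (simp add: matrix_vector_mult_diff_distrib)
    define v where "v = x - y"
    have e2: "A *v v + P *v v = 0" using e Mv v_def by simp
    have orth: "inner (A *v v) (P *v v) = 0" using ANz pN by (simp add: Pv)
    have "inner (A *v v + P *v v) (A *v v + P *v v) = inner (A *v v) (A *v v) + inner (P *v v) (P *v v)"
      using orth by (simp add: inner_add_left inner_add_right inner_commute)
    then have "inner (A *v v) (A *v v) + inner (P *v v) (P *v v) = 0" using e2 by simp
    then have "A *v v = 0" "P *v v = 0"
      by (metis add_nonneg_eq_0_iff inner_ge_zero inner_eq_zero_iff)+
    then have "v \<in> N" "p v = 0" by (auto simp: N_def Pv)
    then have "v = 0" using pfix by simp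
    then show "x = y" by (simp add: v_def)
  qed
  then obtain Bi where BiM: "Bi ** M = mat 1" using matrix_left_invertible_injective by blast
  then have MBi: "M ** Bi = mat 1" using matrix_left_right_inverse by blast
  have BiMv: "Bi *v (M *v v) = v" for v using BiM by (simp add: matrix_vector_mul_assoc)
  have MBiv: "M *v (Bi *v v) = v" for v using MBi by (simp add: matrix_vector_mul_assoc)
  have BiP: "Bi *v (P *v v) = P *v v" for v
    using BiMv[of "P *v v"] by (simp add: Mv AP PP)
  have PBi: "P *v (Bi *v v) = P *v v" for v
  proof -
    have "P *v v = P *v (M *v (Bi *v v))" using MBiv by simp
    also have "\<dots> = P *v (Bi *v v)" by (simp add: Mv matrix_vector_right_distrib PA PP)
    finally show ?thesis by simp
  qed
  define X where "X = Bi - P"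
  have Xv: "X *v v = Bi *v v - P *v v" for v by (simp add: X_def matrix_vector_mult_diff_rdistrib)
  have AXv: "A *v (X *v v) = v - P *v v" for v
  proof -
    have "A *v (X *v v) = A *v (Bi *v v)" by (simp add: Xv matrix_vector_mult_diff_distrib AP)
    also have "\<dots> = M *v (Bi *v v) - P *v (Bi *v v)" by (simp add: Mv)
    finally show ?thesis by (simp add: MBiv PBi)
  qed
  have XAv: "X *v (A *v v) = v - P *v v" for v
  proof -
    have "X *v (A *v v) = Bi *v (A *v v)" by (simp add: Xv PA)
    also have "\<dots> = Bi *v (M *v v - P *v v)" by (simp add: Mv)
    also have "\<dots> = v - P *v v" by (simp add: matrix_vector_mult_diff_distrib BiMv BiP)
    finally show ?thesis .
  qed
  have symIP: "inner x (y - P *v y) = inner (x - P *v x) y" for x y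
    using psym[of x y] by (simp add: inner_diff_left inner_diff_right Pv)
  have "A ** X ** A = A"
    by (simp add: matrix_eq flip: matrix_vector_mul_assoc)
       (simp add: XAv matrix_vector_mult_diff_distrib AP)
  moreover have "X ** A ** X = X"
  proof -
    have "X *v (A *v (X *v x)) = X *v x" for x
    proof -
      have "P *v (X *v x) = 0" by (simp add: Xv matrix_vector_mult_diff_distrib PBi PP)
      then show ?thesis using XAv[of "X *v x"] by simp
    qed
    then show ?thesis by (simp add: matrix_eq flip: matrix_vector_mul_assoc)
  qed
  moreover have "transpose (A ** X) = A ** X"
    by (rule transpose_eqI) (simp add: AXv symIP flip: matrix_vector_mul_assoc)
  moreover have "transpose (X ** A) = X ** A"
    by (rule transpose_eqI) (simp add: XAv symIP flip: matrix_vector_mul_assoc)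
  ultimately show ?thesis unfolding penrose_def by blast
qed

lemma pinv_penrose:
  fixes A :: "real^'n^'n"
  assumes "transpose A = A"
  shows "penrose A (pinv A)"
proof -
  have "\<exists>!X. penrose A X" using penrose_exists_sym[OF assms] penrose_unique by blast
  then have "penrose A (THE X. penrose A X)" by (rule theI')
  then show ?thesis by (simp add: pinv_def penrose_def)
qed



lemma quad_add:
  fixes H :: "real^'n^'n"
  assumes "transpose H = H"
  shows "inner (x + y) (H *v (x + y)) = inner x (H *v x) + 2 * inner y (H *v x) + inner y (H *v y)"
  using sym_inner[OF assms, of x y]
  by (simp add: inner_add_left inner_add_right matrix_vector_right_distrib inner_commute)

lemma quad_scale:
  fixes H :: "real^'n^'n"
  shows "inner (t *\<^sub>R y) (H *v (t *\<^sub>R y)) = t^2 * inner y (H *v y)"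
    "inner (t *\<^sub>R y) (H *v x) = t * inner y (H *v x)"
  by (simp_all add: matrix_vector_mult_scaleR power2_eq_square)

lemma psd_cs:
  fixes H :: "real^'n^'n"
  assumes "psd H"
  shows "(inner y (H *v x))^2 \<le> inner x (H *v x) * inner y (H *v y)"
proof -
  have sym: "transpose H = H" and pos: "\<And>z. 0 \<le> inner z (H *v z)" using assms by (auto simp: psd_def)
  define a b c where "a = inner x (H *v x)" and "b = inner y (H *v x)" and "c = inner y (H *v y)"
  have key: "0 \<le> a + 2 * t * b + t^2 * c" for t
    using pos[of "x + t *\<^sub>R y"] unfolding quad_add[OF sym] a_def b_def c_def
    by (simp add: matrix_vector_mult_scaleR power2_eq_square algebra_simps)
  have c0: "0 \<le> c" using pos c_def by simp
  show ?thesis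
  proof (cases "c = 0")
    case True
    have "b = 0"
    proof (rule ccontr)
      assume "b \<noteq> 0"
      have "0 \<le> a + 2 * (-(a+1)/(2*b)) * b" using key[of "-(a+1)/(2*b)"] True by simp
      also have "\<dots> = -1" using \<open>b \<noteq> 0\<close> by (simp add: field_simps)
      finally show False by simp
    qed
    then show ?thesis using True by (simp add: a_def b_def c_def)
  next
    case False
    then have cp: "c > 0" using c0 by simp
    have "0 \<le> a + 2 * (-b/c) * b + (-b/c)^2 * c" using key .
    also have "\<dots> = a - b^2 / c" using cp by (simp add: field_simps power2_eq_square)
    finally have "b^2 / c \<le> a" by simp
    then have "b^2 \<le> a * c" using cp by (simp add: divide_le_eq)
    then show ?thesis by (simp add: a_def b_def c_def)
  qed
qed

lemma qf_eq:
  fixes H :: "real^'n^'n"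
  assumes "transpose H = H" "c = H *v x0"
  shows "qf H c z = inner (z + (1/2) *\<^sub>R x0) (H *v (z + (1/2) *\<^sub>R x0))"
proof -
  have pe: "H ** pinv H ** H = H" using pinv_penrose[OF assms(1)] by (simp add: penrose_def)
  have "H *v (pinv H *v (H *v x0)) = H *v x0"
    using pe by (metis matrix_vector_mul_assoc)
  then have "inner c (pinv H *v c) = inner x0 (H *v x0)"
    using sym_inner[OF assms(1), of x0 "pinv H *v (H *v x0)"] assms(2) by simp
  then show ?thesis
    unfolding qf_def quad_add[OF assms(1)] assms(2)
    using sym_inner[OF assms(1), of x0 z]
    by (simp add: matrix_vector_mult_scaleR power2_eq_square inner_commute algebra_simps)
qed



lemma exp_quad_concave:
  fixes H :: "real^'n^'n" and S :: "(real^'n) set"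
  assumes psdH: "psd H" and cvx: "convex S" and inD: "\<And>u. u \<in> S \<Longrightarrow> inner (u + a) (H *v (u + a)) \<le> 1/2"
  shows "concave_on S (\<lambda>u. exp (- inner (u + a) (H *v (u + a))))"
  unfolding concave_on_def
proof (rule convex_onI[OF _ cvx])
  fix t :: real and x y assume t: "0 < t" "t < 1" and xS: "x \<in> S" and yS: "y \<in> S"
  have sym: "transpose H = H" using psdH by (simp add: psd_def)
  define Q where "Q w = inner w (H *v w)" for w
  define w0 where "w0 = x + a"
  define d where "d = y - x"
  define Q0 where "Q0 = Q w0"
  define \<beta> where "\<beta> = inner d (H *v w0)"
  define \<gamma> where "\<gamma> = Q d"
  define p where "p s = Q0 + 2 * s * \<beta> + s^2 * \<gamma>" for s
  define g where "g s = - exp (- p s)" for s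
  have pt: "(1 - s) *\<^sub>R x + s *\<^sub>R y + a = w0 + s *\<^sub>R d" for s
    by (simp add: w0_def d_def algebra_simps)
  have pQ: "p s = Q (w0 + s *\<^sub>R d)" for s
    unfolding p_def Q_def Q0_def \<beta>_def \<gamma>_def quad_add[OF sym]
    by (simp add: matrix_vector_mult_scaleR power2_eq_square algebra_simps)
  have gQ: "g s = - exp (- Q ((1 - s) *\<^sub>R x + s *\<^sub>R y + a))" for s
    unfolding g_def pQ pt ..
  define g' where "g' s = (2 * \<beta> + 2 * s * \<gamma>) * exp (- p s)" for s
  define g'' where "g'' s = (2 * \<gamma> - (2 * \<beta> + 2 * s * \<gamma>)^2) * exp (- p s)" for s
  have dp: "(p has_real_derivative (2 * \<beta> + 2 * s * \<gamma>)) (at s)" for s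
    unfolding p_def[abs_def]
    by (auto intro!: derivative_eq_intros simp: algebra_simps power2_eq_square)
  have dg: "(g has_real_derivative g' s) (at s)" for s
    unfolding g_def[abs_def] g'_def
    by (auto intro!: derivative_eq_intros dp simp: algebra_simps)
  have dg': "(g' has_real_derivative g'' s) (at s)" for s
    unfolding g'_def[abs_def] g''_def
    by (auto intro!: derivative_eq_intros dp simp: algebra_simps power2_eq_square)
  have g''nn: "0 \<le> g'' s" if "s \<in> {0..1}" for s
  proof -
    have "(1 - s) *\<^sub>R x + s *\<^sub>R y \<in> S"
      using cvx xS yS that by (simp add: convex_alt)
    then have Qle: "Q (w0 + s *\<^sub>R d) \<le> 1/2" using inD pt unfolding Q_def by metis
    have "\<beta> + s * \<gamma> = inner d (H *v (w0 + s *\<^sub>R d))"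
      by (simp add: \<beta>_def \<gamma>_def Q_def matrix_vector_right_distrib matrix_vector_mult_scaleR inner_add_right)
    then have "(\<beta> + s * \<gamma>)^2 \<le> Q (w0 + s *\<^sub>R d) * \<gamma>"
      using psd_cs[OF psdH, of d "w0 + s *\<^sub>R d"] by (simp add: Q_def \<gamma>_def)
    also have "\<dots> \<le> 1/2 * \<gamma>"
      using Qle psdH by (intro mult_right_mono) (auto simp: \<gamma>_def Q_def psd_def)
    finally have "(2 * \<beta> + 2 * s * \<gamma>)^2 \<le> 2 * \<gamma>" by (simp add: power2_eq_square algebra_simps)
    then show ?thesis by (simp add: g''_def)
  qed
  have "convex_on {0..1} g"
    by (rule f''_ge0_imp_convex[OF convex_real_interval(5) dg dg' g''nn])
  then have "g ((1 - t) *\<^sub>R (0::real) + t *\<^sub>R 1) \<le> (1 - t) * g 0 + t * g 1"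
    using t by (intro convex_onD) auto
  then show "- exp (- inner ((1 - t) *\<^sub>R x + t *\<^sub>R y + a) (H *v ((1 - t) *\<^sub>R x + t *\<^sub>R y + a)))
         \<le> (1 - t) * - exp (- inner (x + a) (H *v (x + a))) + t * - exp (- inner (y + a) (H *v (y + a)))"
    using gQ[of t] gQ[of 0] gQ[of 1] by (simp add: Q_def)
qed



lemma single:
  fixes H :: "real^'n^'n"
  assumes psdH: "psd H" and Hnz: "H \<noteq> 0" and crange: "c \<in> range (\<lambda>x. H *v x)"
    and D0: "0 \<in> Dset H c"
  shows "\<exists>z. is_qmin H c z"
    and "is_qmin H c z \<Longrightarrow> norm u \<le> norm z \<Longrightarrow> u \<in> Dset H c"
proof -
  have sym: "transpose H = H" and pos: "\<And>z. 0 \<le> inner z (H *v z)" using psdH by (auto simp: psd_def)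
  obtain x0 where cx: "c = H *v x0" using crange by auto
  define a where "a = (1/2) *\<^sub>R x0"
  define Q where "Q w = inner w (H *v w)" for w
  have qfQ: "qf H c z = Q (z + a)" for z using qf_eq[OF sym cx] by (simp add: Q_def a_def)
  have Qa: "Q a \<le> 1/2" using D0 qfQ[of 0] by (simp add: Dset_def)
  have contQ: "continuous_on A (\<lambda>z. Q (z + a))" for A
    unfolding Q_def matrix_vector_right_distrib by (intro continuous_intros)
  have lineQ: "Q (s *\<^sub>R v + a) = Q a + 2 * s * inner a (H *v v) + s^2 * Q v" for s v
    unfolding Q_def quad_add[OF sym]
    by (simp add: matrix_vector_mult_scaleR power2_eq_square algebra_simps)
  show "\<exists>z. is_qmin H c z"
  proof -
    obtain v where Hv: "H *v v \<noteq> 0" using Hnz by (metis matrix_eq matrix_vector_mult_0)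
    have gpos: "Q v > 0"
    proof (rule ccontr)
      assume "\<not> Q v > 0"
      then have "Q v = 0" using pos[of v] by (simp add: Q_def)
      then have "(inner (H *v v) (H *v v))^2 \<le> 0" using psd_cs[OF psdH, of "H *v v" v] by (simp add: Q_def)
      then have "inner (H *v v) (H *v v) = 0" by simp
      then show False using Hv by simp
    qed
    define \<gamma> where "\<gamma> = Q v"
    define \<beta> where "\<beta> = 2 * inner a (H *v v)"
    define \<kappa> where "\<kappa> = Q a"
    define f where "f s = Q (s *\<^sub>R v + a)" for s
    have fs: "f s = \<kappa> + \<beta> * s + \<gamma> * s^2" for s
      unfolding f_def lineQ \<kappa>_def \<beta>_def \<gamma>_def by (simp add: algebra_simps)
    define T where "T = (\<bar>\<beta>\<bar> + 1) / \<gamma> + 1"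
    have gp: "\<gamma> > 0" using gpos \<gamma>_def by simp
    have T1: "T \<ge> 1" using gp by (simp add: T_def)
    have "\<gamma> * T \<ge> \<bar>\<beta>\<bar> + 1" using gp by (simp add: T_def field_simps)
    then have A1: "\<gamma> * (T * T) \<ge> (\<bar>\<beta>\<bar> + 1) * T" using T1
      by (metis mult.assoc mult_right_mono dual_order.trans zero_le_one)
    have A2: "\<bar>\<beta>\<bar> * T \<ge> - \<beta> * T" using T1 by (intro mult_right_mono) auto
    have A3: "(\<bar>\<beta>\<bar> + 1) * T = \<bar>\<beta>\<bar> * T + T" by (simp add: distrib_right)
    have A4: "\<kappa> \<ge> 0" using pos by (simp add: \<kappa>_def Q_def)
    have fT: "f T \<ge> 1/2" unfolding fs power2_eq_square using A1 A2 A3 A4 T1 by linarith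
    have f0: "f 0 \<le> 1/2" using Qa by (simp add: f_def)
    have "continuous_on {0..T} f" unfolding fs[abs_def] by (intro continuous_intros)
    then obtain s where "f s = 1/2" using IVT'[of f 0 "1/2" T] f0 fT T1 by auto
    then have ne: "{z. Q (z + a) = 1/2} \<noteq> {}" unfolding f_def by blast
    have cl: "closed {z. Q (z + a) = 1/2}"
      by (rule closed_Collect_eq) (auto intro: contQ)
    obtain z where zS: "z \<in> {z. Q (z + a) = 1/2}" and zmin: "\<And>y. y \<in> {z. Q (z + a) = 1/2} \<Longrightarrow> dist 0 z \<le> dist 0 y"
      using distance_attains_inf[OF cl ne, of 0] by blast
    have "is_qmin H c z"
      unfolding is_qmin_def qfQ
    proof (intro conjI allI impI)
      show "Q (z + a) = 1/2" using zS by simp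
      fix y assume "Q (y + a) = 1/2"
      then have "norm z \<le> norm y" using zmin[of y] by simp
      then have "(norm z)^2 \<le> (norm y)^2" by (simp add: power_mono)
      then show "inner z z \<le> inner y y" by (simp add: dot_square_norm)
    qed
    then show ?thesis by blast
  qed
  assume qm: "is_qmin H c z" and nu: "norm u \<le> norm z"
  show "u \<in> Dset H c"
  proof (rule ccontr)
    assume "u \<notin> Dset H c"
    then have qu: "Q (u + a) > 1/2" by (simp add: Dset_def qfQ)
    define f where "f s = Q (s *\<^sub>R u + a)" for s
    have f0: "f 0 \<le> 1/2" using Qa by (simp add: f_def)
    have f1: "f 1 > 1/2" using qu by (simp add: f_def)
    have "continuous_on {0..1} f" unfolding f_def Q_def matrix_vector_right_distrib matrix_vector_mult_scaleR
      by (intro continuous_intros)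
    then obtain s where s: "0 \<le> s" "s \<le> 1" "f s = 1/2" using IVT'[of f 0 "1/2" 1] f0 f1 by auto
    have s1: "s < 1" using s f1 by (cases "s = 1") auto
    have u0: "u \<noteq> 0" using qu Qa by auto
    have "qf H c (s *\<^sub>R u) = 1/2" using s by (simp add: qfQ f_def)
    then have "inner z z \<le> inner (s *\<^sub>R u) (s *\<^sub>R u)" using qm unfolding is_qmin_def by blast
    also have "\<dots> = s^2 * (norm u)^2" by (simp add: dot_square_norm power_mult_distrib)
    also have "\<dots> < (norm u)^2"
    proof -
      have "s^2 < 1" using s s1 by (simp add: power2_eq_square mult_le_one) (smt (verit) mult_left_le_one_le)
      moreover have "(norm u)^2 > 0" using u0 by simp
      ultimately show ?thesis by simp
    qed
    also have "\<dots> \<le> (norm z)^2" using nu by (simp add: power_mono)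
    also have "\<dots> = inner z z" by (simp add: dot_square_norm)
    finally show False by simp
  qed
qed



lemma norm_blk_sum: "(norm u)^2 = (\<Sum>l\<in>UNIV. (norm (blk u l))^2)"
  for u :: "real^('N::finite \<times> 'u::finite)"
proof -
  have "(norm u)^2 = (\<Sum>i\<in>UNIV. u $ i * u $ i)" by (simp add: dot_square_norm[symmetric] inner_vec_def)
  also have "\<dots> = (\<Sum>i\<in>UNIV \<times> UNIV. u $ i * u $ i)" by (simp add: UNIV_Times_UNIV)
  also have "\<dots> = (\<Sum>l\<in>UNIV. \<Sum>k\<in>UNIV. u $ (l, k) * u $ (l, k))" by (simp add: sum.cartesian_product)
  also have "\<dots> = (\<Sum>l\<in>UNIV. (norm (blk u l))^2)"
    by (simp add: dot_square_norm[symmetric] inner_vec_def blk_def)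
  finally show ?thesis .
qed

lemma Uset_norm:
  fixes u :: "real^('N::finite \<times> 'u::finite)"
  assumes "u \<in> Uset \<epsilon>" shows "norm u \<le> sqrt (\<epsilon> * real CARD('N))"
proof -
  have "(norm u)^2 \<le> (\<Sum>l\<in>(UNIV::'N set). \<epsilon>)"
    unfolding norm_blk_sum using assms by (intro sum_mono) (simp add: Uset_def)
  then have "(norm u)^2 \<le> \<epsilon> * real CARD('N)" by (simp add: mult.commute)
  then show ?thesis by (simp add: real_le_rsqrt)
qed

lemma Uset_convex:
  assumes "\<epsilon> > 0" shows "convex (Uset \<epsilon> :: (real^('N::finite \<times> 'u::finite)) set)"
proof (rule convexI)
  fix x y :: "real^('N \<times> 'u)" and a b :: real
  assume xU: "x \<in> Uset \<epsilon>" and yU: "y \<in> Uset \<epsilon>" and ab0: "0 \<le> a" "0 \<le> b" "a + b = 1"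
  then have ab: "0 \<le> a \<and> 0 \<le> b \<and> a + b = 1" by simp
  have bl: "blk (a *\<^sub>R x + b *\<^sub>R y) l = a *\<^sub>R blk x l + b *\<^sub>R blk y l" for l
    by (simp add: blk_def vec_eq_iff)
  have nx: "norm (blk x l) \<le> sqrt \<epsilon>" for l using xU by (simp add: Uset_def real_le_rsqrt)
  have ny: "norm (blk y l) \<le> sqrt \<epsilon>" for l using yU by (simp add: Uset_def real_le_rsqrt)
  show "a *\<^sub>R x + b *\<^sub>R y \<in> Uset \<epsilon>"
    unfolding Uset_def
  proof (intro CollectI allI)
    fix l
    have "norm (blk (a *\<^sub>R x + b *\<^sub>R y) l) \<le> a * norm (blk x l) + b * norm (blk y l)"
      unfolding bl using ab by (metis abs_of_nonneg norm_scaleR norm_triangle_ineq)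
    also have "\<dots> \<le> a * sqrt \<epsilon> + b * sqrt \<epsilon>"
      using ab nx ny by (intro add_mono mult_left_mono) auto
    also have "\<dots> = sqrt \<epsilon>" using ab by (simp flip: distrib_right)
    finally have "norm (blk (a *\<^sub>R x + b *\<^sub>R y) l) \<le> sqrt \<epsilon>" .
    then have "(norm (blk (a *\<^sub>R x + b *\<^sub>R y) l))^2 \<le> (sqrt \<epsilon>)^2" by (intro power_mono) auto
    then show "(norm (blk (a *\<^sub>R x + b *\<^sub>R y) l))^2 \<le> \<epsilon>" using assms by simp
  qed
qed

lemma concave_on_sum_fun:
  assumes "finite P" "convex S" "\<And>i. i \<in> P \<Longrightarrow> concave_on S (f i)"
  shows "concave_on S (\<lambda>u. \<Sum>i\<in>P. f i u)"
  using assms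
proof (induction P rule: finite_induct)
  case empty then show ?case by (simp add: concave_on_const)
next
  case (insert x F)
  then show ?case by (simp add: concave_on_add)
qed

lemma term_concave:
  fixes H :: "real^'n^'n"
  assumes psdH: "psd H" and cx: "c = H *v x0" and cvx: "convex S" and w: "w \<ge> 0"
    and SD: "S \<subseteq> Dset H c"
  shows "concave_on S (\<lambda>u. w * exp (- (u \<bullet> (H *v u)) - c \<bullet> u - h))"
proof -
  have sym: "transpose H = H" using psdH by (simp add: psd_def)
  define a where "a = (1/2) *\<^sub>R x0"
  define Q where "Q v = inner v (H *v v)" for v
  have eq: "- (u \<bullet> (H *v u)) - c \<bullet> u - h = - Q (u + a) + (Q a - h)" for u
    unfolding Q_def quad_add[OF sym] cx a_def using sym_inner[OF sym, of x0 u]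
    by (simp add: matrix_vector_mult_scaleR algebra_simps)
  have fe: "w * exp (- (u \<bullet> (H *v u)) - c \<bullet> u - h) = (w * exp (Q a - h)) * exp (- Q (u + a))" for u
    unfolding eq by (simp add: mult_exp_exp)
  have inD: "Q (u + a) \<le> 1/2" if "u \<in> S" for u
    using SD that qf_eq[OF sym cx, of u] by (auto simp: Dset_def Q_def a_def)
  have "concave_on S (\<lambda>u. exp (- Q (u + a)))"
    unfolding Q_def by (rule exp_quad_concave[OF psdH cvx]) (use inD Q_def in auto)
  then have "concave_on S (\<lambda>u. (w * exp (Q a - h)) * exp (- Q (u + a)))"
    using w by (intro concave_on_cmul) auto
  then show ?thesis unfolding fe .
qed


theorem mainTheorem3:
  fixes P :: "('i \<times> 'i) set"
    and H :: "'i \<times> 'i \<Rightarrow> real^('N::finite \<times> 'u::finite)^('N \<times> 'u)"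
    and c :: "'i \<times> 'i \<Rightarrow> real^('N \<times> 'u)"
    and h w :: "'i \<times> 'i \<Rightarrow> real"
    and \<epsilon> :: real
  assumes "finite P"
    and "\<epsilon> > 0"
    and "\<And>ij. ij \<in> P \<Longrightarrow> psd (H ij) \<and> H ij \<noteq> 0"
    and "\<And>ij. ij \<in> P \<Longrightarrow> c ij \<in> range (\<lambda>x. H ij *v x)"
    and "\<And>ij. ij \<in> P \<Longrightarrow> w ij \<ge> 0"
    and "\<And>ij. ij \<in> P \<Longrightarrow> 0 \<in> Dset (H ij) (c ij)"
  shows "(\<forall>ij\<in>P. \<exists>z. is_qmin (H ij) (c ij) z) \<and>
    (\<forall>zs. (\<forall>ij\<in>P. is_qmin (H ij) (c ij) (zs ij)) \<longrightarrow>
       (\<forall>ij\<in>P. \<forall>u. norm u \<le> norm (zs ij) \<longrightarrow> u \<in> Dset (H ij) (c ij)) \<and>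
       ((\<forall>ij\<in>P. sqrt (\<epsilon> * real CARD('N)) \<le> norm (zs ij)) \<longrightarrow>
          (\<forall>ij\<in>P. Uset \<epsilon> \<subseteq> Dset (H ij) (c ij)) \<and>
          concave_on (Uset \<epsilon>) (Fsum P w H c h)))"
proof (intro conjI allI impI)
  show "\<forall>ij\<in>P. \<exists>z. is_qmin (H ij) (c ij) z"
  proof
    fix ij assume ij: "ij \<in> P"
    show "\<exists>z. is_qmin (H ij) (c ij) z"
      using assms(3)[OF ij] by (intro single(1)[OF _ _ assms(4)[OF ij] assms(6)[OF ij]]) auto
  qed
  fix zs assume zs: "\<forall>ij\<in>P. is_qmin (H ij) (c ij) (zs ij)"
  show i: "\<forall>ij\<in>P. \<forall>u. norm u \<le> norm (zs ij) \<longrightarrow> u \<in> Dset (H ij) (c ij)"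
  proof (intro ballI allI impI)
    fix ij and u :: "real^('N \<times> 'u)" assume ij: "ij \<in> P" and nu: "norm u \<le> norm (zs ij)"
    show "u \<in> Dset (H ij) (c ij)"
      using assms(3)[OF ij] zs ij nu by (intro single(2)[OF _ _ assms(4)[OF ij] assms(6)[OF ij]]) auto
  qed
  assume cond: "\<forall>ij\<in>P. sqrt (\<epsilon> * real CARD('N)) \<le> norm (zs ij)"
  show sub: "\<forall>ij\<in>P. Uset \<epsilon> \<subseteq> Dset (H ij) (c ij)"
  proof (intro ballI subsetI)
    fix ij and u :: "real^('N \<times> 'u)" assume ij: "ij \<in> P" and u: "u \<in> Uset \<epsilon>"
    have "norm u \<le> norm (zs ij)" using Uset_norm[OF u] cond ij by (meson order_trans)
    then show "u \<in> Dset (H ij) (c ij)" using i ij by blast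
  qed
  show "concave_on (Uset \<epsilon>) (Fsum P w H c h)"
    unfolding Fsum_def[abs_def]
  proof (rule concave_on_sum_fun[OF assms(1) Uset_convex[OF assms(2)]])
    fix ij assume ij: "ij \<in> P"
    obtain x0 where cx: "c ij = H ij *v x0" using assms(4)[OF ij] by auto
    show "concave_on (Uset \<epsilon>) (\<lambda>u. w ij * exp (- (u \<bullet> (H ij *v u)) - c ij \<bullet> u - h ij))"
      using assms(3)[OF ij] sub ij by (intro term_concave[OF _ cx Uset_convex[OF assms(2)] assms(5)[OF ij]]) auto
  qed
qed

end
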